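(* Let $M$ be the 5-dimensional manifold of plane triangles $(w_1,w_2,w_3)$ of oriented area $3/2$. For such a triangle let $c=(w_1+w_2+w_3)/3$, $u=w_1-c$, $v=w_2-c$ (so $[u,v]=1$). Then the map $(w_1,w_2,w_3)\mapsto((u,v),c)$ is a $\mathbb Z_3$-equivariant diffeomorphism $M\to SL(2,\mathbb R)\times\mathbb R^2$. Moreover, the fibers of the projection $SL(2,\mathbb R)\times\mathbb R^2\to SL(2,\mathbb R)$ are transverse to the distribution $\mathcal F$ on $M$.
   Context: $[\cdot,\cdot]$ is the determinant of two plane vectors; a pair $(u,v)$ with $[u,v]=1$ is viewed as an element of $SL(2,\mathbb R)$. $\mathbb Z_3$ acts on $M$ by the cyclic permutation $\sigma(w_1,w_2,w_3)=(w_2,w_3,w_1)$, on $SL(2,\mathbb R)$ by $T(u,v)=(v,-u-v)$, and on $SL(2,\mathbb R)\times\mathbb R^2$ by $T$ on the first factor and trivially on the second. $\mathcal F$ is the 3-dimensional distribution on $M$ defined by: a tangent vector (velocities of $w_1,w_2,w_3$) lies in $\mathcal F$ iff the velocity of $w_i$ is parallel to the line $w_{i+1}w_{i+2}$ for $i=1,2,3$ (indices mod 3). *)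

theory Defs
  imports "HOL-Analysis.Analysis"
begin

type_synonym pt = "real \<times> real"
type_synonym triangle = "pt \<times> pt \<times> pt"

definition det2 :: "pt \<Rightarrow> pt \<Rightarrow> real" where
  "det2 x y = fst x * snd y - snd x * fst y"

definition Mtri :: "triangle set" where
  "Mtri = {(w1, w2, w3). det2 (w2 - w1) (w3 - w1) / 2 = 3 / 2}"

definition SL2 :: "(pt \<times> pt) set" where
  "SL2 = {(u, v). det2 u v = 1}"

definition SL2R2 :: "((pt \<times> pt) \<times> pt) set" where
  "SL2R2 = SL2 \<times> UNIV"

definition Phi :: "triangle \<Rightarrow> (pt \<times> pt) \<times> pt" where
  "Phi w = (case w of (w1, w2, w3) \<Rightarrow>
     (let c = (1/3) *\<^sub>R (w1 + w2 + w3) in ((w1 - c, w2 - c), c)))"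

definition sigma :: "triangle \<Rightarrow> triangle" where
  "sigma w = (case w of (w1, w2, w3) \<Rightarrow> (w2, w3, w1))"

definition Tsl :: "pt \<times> pt \<Rightarrow> pt \<times> pt" where
  "Tsl p = (case p of (u, v) \<Rightarrow> (v, - u - v))"

definition Tprod :: "(pt \<times> pt) \<times> pt \<Rightarrow> (pt \<times> pt) \<times> pt" where
  "Tprod p = (Tsl (fst p), snd p)"

fun Cn :: "nat \<Rightarrow> 'a::euclidean_space set \<Rightarrow> ('a \<Rightarrow> 'b::real_normed_vector) \<Rightarrow> bool" where
  "Cn 0 U f = continuous_on U f"
| "Cn (Suc n) U f = (continuous_on U f \<and> (\<forall>x\<in>U. f differentiable (at x)) \<and>
      (\<forall>v. Cn n U (\<lambda>x. frechet_derivative f (at x) v)))"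

definition smooth_on :: "'a::euclidean_space set \<Rightarrow> ('a \<Rightarrow> 'b::real_normed_vector) \<Rightarrow> bool" where
  "smooth_on U f \<longleftrightarrow> open U \<and> (\<forall>n. Cn n U f)"

definition smooth_map :: "'a::euclidean_space set \<Rightarrow> ('a \<Rightarrow> 'b::real_normed_vector) \<Rightarrow> bool" where
  "smooth_map S f \<longleftrightarrow> (\<forall>x\<in>S. \<exists>U g. x \<in> U \<and> smooth_on U g \<and> (\<forall>y\<in>S \<inter> U. f y = g y))"

definition diffeomorphism_between ::
  "'a::euclidean_space set \<Rightarrow> 'b::euclidean_space set \<Rightarrow> ('a \<Rightarrow> 'b) \<Rightarrow> bool" where
  "diffeomorphism_between S T f \<longleftrightarrow>
     bij_betw f S T \<and> smooth_map S f \<and> smooth_map T (the_inv_into S f)"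

definition tangent_space :: "'a::euclidean_space set \<Rightarrow> 'a \<Rightarrow> 'a set" where
  "tangent_space S p = {v. \<exists>\<gamma> e. e > 0 \<and> \<gamma> 0 = p \<and> (\<forall>t. \<bar>t\<bar> < e \<longrightarrow> \<gamma> t \<in> S) \<and>
                              (\<gamma> has_vector_derivative v) (at 0)}"

definition Fdist :: "triangle \<Rightarrow> triangle set" where
  "Fdist w = (case w of (w1, w2, w3) \<Rightarrow>
     {a \<in> tangent_space Mtri w. case a of (a1, a2, a3) \<Rightarrow>
        det2 a1 (w3 - w2) = 0 \<and> det2 a2 (w1 - w3) = 0 \<and> det2 a3 (w2 - w1) = 0})"

definition fiber :: "triangle \<Rightarrow> triangle set" where
  "fiber w = {q \<in> Mtri. fst (Phi q) = fst (Phi w)}"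

definition transverse_at :: "'a::euclidean_space set \<Rightarrow> 'a set \<Rightarrow> 'a set \<Rightarrow> bool" where
  "transverse_at A B T \<longleftrightarrow> {x + y | x y. x \<in> A \<and> y \<in> B} = T"

end

theory Submission
  imports Defs
begin

lemma Cn_const: "Cn n U (\<lambda>x. k)"
proof (induction n arbitrary: k)
  case 0 then show ?case by simp
next
  case (Suc n)
  have "\<And>x v. frechet_derivative (\<lambda>x. k) (at x) v = 0"
    using frechet_derivative_at[OF has_derivative_const] by metis
  then show ?case using Suc by simp
qed

lemma Cn_linear: assumes "bounded_linear f" shows "Cn n U f"
proof (cases n)
  case 0 then show ?thesis using assms by (simp add: linear_continuous_on)
next
  case (Suc m)
  have d: "\<And>x. (f has_derivative f) (at x)" using assms by (rule bounded_linear.has_derivative[OF _ has_derivative_ident])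
  have "\<And>x v. frechet_derivative f (at x) v = f v"
    using frechet_derivative_at[OF d] by metis
  moreover have "\<And>x. f differentiable (at x)" using d differentiable_def by blast
  ultimately show ?thesis using Suc assms by (simp add: linear_continuous_on Cn_const)
qed

lemma smooth_map_linear:
  assumes "bounded_linear g" "\<And>y. y \<in> S \<Longrightarrow> f y = g y"
  shows "smooth_map S f"
  unfolding smooth_map_def smooth_on_def
  using assms Cn_linear by (metis IntD1 UNIV_I open_UNIV)

definition Ginv :: "(pt \<times> pt) \<times> pt \<Rightarrow> triangle" where
  "Ginv p = (fst (fst p) + snd p, snd (fst p) + snd p, snd p - fst (fst p) - snd (fst p))"

lemma lin_Phi: "bounded_linear Phi"
proof -
  have "linear Phi"
    by (rule linearI) (auto simp: Phi_def split_beta algebra_simps scaleR_right_distrib)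
  then show ?thesis by (simp add: linear_conv_bounded_linear)
qed

lemma lin_Ginv: "bounded_linear Ginv"
proof -
  have "linear Ginv"
    by (rule linearI) (auto simp: Ginv_def split_beta algebra_simps scaleR_right_distrib)
  then show ?thesis by (simp add: linear_conv_bounded_linear)
qed

definition Qf :: "triangle \<Rightarrow> real" where
  "Qf w = det2 (fst (snd w) - fst w) (snd (snd w) - fst w)"

lemma Mtri_iff: "w \<in> Mtri \<longleftrightarrow> Qf w = 3"
  by (cases w) (auto simp: Mtri_def Qf_def)

lemma part1: "w \<in> Mtri \<Longrightarrow> det2 (fst (fst (Phi w))) (snd (fst (Phi w))) = 1"
  apply (cases w)
  apply (auto simp: Mtri_def Phi_def det2_def split_beta field_simps)
  done

lemma Phi_inj: "inj_on Phi Mtri"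
  unfolding inj_on_def
  apply (auto simp: Phi_def split_beta prod_eq_iff Let_def field_simps)
  done

lemma Phi_Ginv: "Phi (Ginv p) = p"
  by (auto simp: Phi_def Ginv_def split_beta prod_eq_iff algebra_simps Let_def)

lemma Ginv_Phi: "Ginv (Phi w) = w"
  by (auto simp: Phi_def Ginv_def split_beta prod_eq_iff algebra_simps Let_def)

lemma Ginv_in: "p \<in> SL2R2 \<Longrightarrow> Ginv p \<in> Mtri"
  by (auto simp: Mtri_def SL2R2_def SL2_def Ginv_def det2_def split_beta algebra_simps)

lemma Phi_img: "Phi ` Mtri = SL2R2"
proof
  have "Phi x \<in> SL2R2" if "x \<in> Mtri" for x
    using part1[OF that] by (cases "Phi x") (auto simp: SL2R2_def SL2_def)
  then show "Phi ` Mtri \<subseteq> SL2R2" by blast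
  show "SL2R2 \<subseteq> Phi ` Mtri" using Phi_Ginv Ginv_in by (metis image_eqI subsetI)
qed

lemma part2: "diffeomorphism_between Mtri SL2R2 Phi"
  unfolding diffeomorphism_between_def
proof (intro conjI)
  show "bij_betw Phi Mtri SL2R2" using Phi_inj Phi_img by (simp add: bij_betw_def)
  show "smooth_map Mtri Phi" using smooth_map_linear[OF lin_Phi] by blast
  show "smooth_map SL2R2 (the_inv_into Mtri Phi)"
  proof (rule smooth_map_linear[OF lin_Ginv])
    fix y assume "y \<in> SL2R2"
    then show "the_inv_into Mtri Phi y = Ginv y"
      using the_inv_into_f_eq[OF Phi_inj Phi_Ginv Ginv_in] by blast
  qed
qed

lemma part3: "w \<in> Mtri \<Longrightarrow> sigma w \<in> Mtri \<and> Phi (sigma w) = Tprod (Phi w)"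
  by (cases w) (auto simp: Let_def simp: Mtri_def sigma_def Phi_def Tprod_def Tsl_def det2_def split_beta prod_eq_iff algebra_simps)

lemma det2_add_l[simp]: "det2 (x + y) z = det2 x z + det2 y z"
  by (simp add: det2_def algebra_simps)
lemma det2_add_r[simp]: "det2 z (x + y) = det2 z x + det2 z y"
  by (simp add: det2_def algebra_simps)
lemma det2_diff_l[simp]: "det2 (x - y) z = det2 x z - det2 y z"
  by (simp add: det2_def algebra_simps)
lemma det2_diff_r[simp]: "det2 z (x - y) = det2 z x - det2 z y"
  by (simp add: det2_def algebra_simps)
lemma det2_minus_l[simp]: "det2 (- x) z = - det2 x z"
  by (simp add: det2_def algebra_simps)
lemma det2_minus_r[simp]: "det2 z (- x) = - det2 z x"
  by (simp add: det2_def algebra_simps)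
lemma det2_scale_l[simp]: "det2 (r *\<^sub>R x) z = r * det2 x z"
  by (simp add: det2_def algebra_simps)
lemma det2_scale_r[simp]: "det2 z (r *\<^sub>R x) = r * det2 z x"
  by (simp add: det2_def algebra_simps)
lemma det2_self[simp]: "det2 x x = 0"
  by (simp add: det2_def algebra_simps)
lemma det2_swap: "det2 x y = - det2 y x"
  by (simp add: det2_def algebra_simps)

lemma Qf_simp: "Qf (p1, p2, p3) = det2 (p2 - p1) (p3 - p1)"
  by (simp add: Qf_def)

lemma Qf_trans: "Qf (p1 + z, p2 + z, p3 + z) = Qf (p1, p2, p3)"
  by (simp add: Qf_simp)

lemma Qf_m1: "det2 x (p3 - p2) = 0 \<Longrightarrow> Qf (p1 + x, p2, p3) = Qf (p1, p2, p3)"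
  unfolding Qf_simp det2_def by (simp add: algebra_simps)

lemma Qf_m2: "Qf (p1, p2 + s *\<^sub>R (p1 - p3), p3) = Qf (p1, p2, p3)"
  unfolding Qf_simp det2_def by (simp add: algebra_simps)

lemma Qf_m3: "Qf (p1, p2, p3 + s *\<^sub>R (p2 - p1)) = Qf (p1, p2, p3)"
  unfolding Qf_simp det2_def by (simp add: algebra_simps)

definition Ksum :: "triangle \<Rightarrow> triangle \<Rightarrow> real" where
  "Ksum w h = det2 (fst h) (snd (snd w) - fst (snd w)) + det2 (fst (snd h)) (fst w - snd (snd w))
     + det2 (snd (snd h)) (fst (snd w) - fst w)"

lemma Qf_deriv: "(Qf has_derivative (\<lambda>h. - Ksum w h)) (at w)"
  unfolding Qf_def det2_def Ksum_def
  apply (rule has_derivative_eq_rhs)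
   apply (rule derivative_eq_intros refl)+
  apply (rule ext)
  apply (simp add: algebra_simps)
  done

lemma tan_sub:
  assumes "a \<in> tangent_space Mtri w"
  shows "Ksum w a = 0"
proof -
  obtain \<gamma> e where e: "e > 0" "\<gamma> 0 = w" "\<And>t. \<bar>t\<bar> < e \<Longrightarrow> \<gamma> t \<in> Mtri"
    and hv: "(\<gamma> has_vector_derivative a) (at 0)"
    using assms unfolding tangent_space_def by blast
  have hd: "(\<gamma> has_derivative (\<lambda>h. h *\<^sub>R a)) (at 0)"
    using hv by (simp add: has_vector_derivative_def)
  have c: "((Qf \<circ> \<gamma>) has_derivative ((\<lambda>h. - Ksum w h) \<circ> (\<lambda>h. h *\<^sub>R a))) (at 0)"
    by (rule diff_chain_at[OF hd]) (use Qf_deriv e(2) in simp)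
  have c0: "((Qf \<circ> \<gamma>) has_derivative (\<lambda>h. 0)) (at 0)"
  proof (rule has_derivative_transform_within_open[OF has_derivative_const[of 3] open_ball[of 0 e]])
    show "(0::real) \<in> ball 0 e" using e by simp
    fix t :: real assume "t \<in> ball 0 e"
    then have "\<bar>t\<bar> < e" by simp
    then show "3 = (Qf \<circ> \<gamma>) t" using e(3) Mtri_iff by simp
  qed
  have "((\<lambda>h. - Ksum w h) \<circ> (\<lambda>h. h *\<^sub>R a)) = (\<lambda>h. 0)"
    using has_derivative_unique[OF c c0] .
  then have "- Ksum w (1 *\<^sub>R a) = 0" by (metis comp_apply)
  then show ?thesis by simp
qed

definition par :: "pt \<Rightarrow> pt \<Rightarrow> real" where
  "par e x = (fst x * fst e + snd x * snd e) / (fst e ^ 2 + snd e ^ 2)"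

lemma par_eq: assumes "det2 x e = 0" "e \<noteq> 0" shows "par e x *\<^sub>R e = x"
proof -
  obtain p q where e: "e = (p, q)" by (cases e)
  obtain y z where x: "x = (y, z)" by (cases x)
  have "p ^ 2 + q ^ 2 \<noteq> 0" using assms(2) e by (simp add: sum_power2_eq_zero_iff zero_prod_def)
  moreover have "y * q = z * p" using assms(1) by (simp add: det2_def e x)
  ultimately show ?thesis unfolding e x par_def
    by (simp add: field_simps power2_eq_square)
qed

definition dsol :: "triangle \<Rightarrow> triangle \<Rightarrow> pt" where
  "dsol w a = (1/3) *\<^sub>R (det2 (fst (snd a)) (fst w - snd (snd w)) *\<^sub>R (snd (snd w) - fst (snd w))
      - det2 (fst a) (snd (snd w) - fst (snd w)) *\<^sub>R (fst w - snd (snd w)))"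

lemma dsol_gen:
  assumes "det2 e1 e2 = 3"
  shows "det2 ((1/3) *\<^sub>R (b *\<^sub>R e1 - a *\<^sub>R e2)) e1 = a"
    and "det2 ((1/3) *\<^sub>R (b *\<^sub>R e1 - a *\<^sub>R e2)) e2 = b"
    and "det2 ((1/3) *\<^sub>R (b *\<^sub>R e1 - a *\<^sub>R e2)) (- (e1 + e2)) = - a - b"
proof -
  have q': "det2 e2 e1 = -3" using assms det2_swap by (metis)
  show "det2 ((1/3) *\<^sub>R (b *\<^sub>R e1 - a *\<^sub>R e2)) e1 = a"
    using q' by simp
  show "det2 ((1/3) *\<^sub>R (b *\<^sub>R e1 - a *\<^sub>R e2)) e2 = b"
    using assms by simp
  show "det2 ((1/3) *\<^sub>R (b *\<^sub>R e1 - a *\<^sub>R e2)) (- (e1 + e2)) = - a - b"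
    using assms q' by (simp add: algebra_simps)
qed

lemma dsol_props:
  assumes "Qf (w1, w2, w3) = 3"
  shows "det2 (dsol (w1, w2, w3) (v1, v2, v3)) (w3 - w2) = det2 v1 (w3 - w2)"
    and "det2 (dsol (w1, w2, w3) (v1, v2, v3)) (w1 - w3) = det2 v2 (w1 - w3)"
    and "det2 (dsol (w1, w2, w3) (v1, v2, v3)) (w2 - w1) = - det2 v1 (w3 - w2) - det2 v2 (w1 - w3)"
proof -
  have q: "det2 (w3 - w2) (w1 - w3) = 3" using assms unfolding Qf_simp det2_def by (simp add: algebra_simps)
  have e: "w2 - w1 = - ((w3 - w2) + (w1 - w3))" by (simp add: algebra_simps)
  show "det2 (dsol (w1, w2, w3) (v1, v2, v3)) (w3 - w2) = det2 v1 (w3 - w2)"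
    unfolding dsol_def fst_conv snd_conv by (rule dsol_gen(1)[OF q])
  show "det2 (dsol (w1, w2, w3) (v1, v2, v3)) (w1 - w3) = det2 v2 (w1 - w3)"
    unfolding dsol_def fst_conv snd_conv by (rule dsol_gen(2)[OF q])
  show "det2 (dsol (w1, w2, w3) (v1, v2, v3)) (w2 - w1) = - det2 v1 (w3 - w2) - det2 v2 (w1 - w3)"
    unfolding dsol_def fst_conv snd_conv e by (rule dsol_gen(3)[OF q])
qed

lemma tan_sup:
  assumes w: "w = (w1, w2, w3)" and a: "a = (v1, v2, v3)" and M: "w \<in> Mtri" and K: "Ksum w a = 0"
  shows "a \<in> tangent_space Mtri w"
proof -
  have Q: "Qf (w1, w2, w3) = 3" using M w Mtri_iff by simp
  define d where "d = dsol w a"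
  define x1 where "x1 = v1 - d"
  define s2 where "s2 = par (w1 - w3) (v2 - d)"
  define s3 where "s3 = par (w2 - w1) (v3 - d)"
  have d1: "det2 d (w3 - w2) = det2 v1 (w3 - w2)" and d2: "det2 d (w1 - w3) = det2 v2 (w1 - w3)"
    and d3: "det2 d (w2 - w1) = - det2 v1 (w3 - w2) - det2 v2 (w1 - w3)"
    using dsol_props[OF Q, of v1 v2 v3] unfolding d_def w a by auto
  have q: "det2 (w3 - w2) (w1 - w3) = 3" using Q unfolding Qf_simp det2_def by (simp add: algebra_simps)
  have ne2: "w1 - w3 \<noteq> 0" using q by auto
  have ne3: "w2 - w1 \<noteq> 0" using Q by (auto simp: Qf_simp)
  have Ks: "det2 v1 (w3 - w2) + det2 v2 (w1 - w3) + det2 v3 (w2 - w1) = 0"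
    using K unfolding w a Ksum_def by simp
  have x1p: "det2 x1 (w3 - w2) = 0" unfolding x1_def using d1 by simp
  have s2p: "s2 *\<^sub>R (w1 - w3) = v2 - d" unfolding s2_def
    by (rule par_eq[OF _ ne2]) (use d2 in simp)
  have s3p: "s3 *\<^sub>R (w2 - w1) = v3 - d" unfolding s3_def
    by (rule par_eq[OF _ ne3]) (use d3 Ks in simp)
  define p1 where "p1 = (\<lambda>t::real. w1 + t *\<^sub>R x1)"
  define p2 where "p2 = (\<lambda>t::real. w2 + t *\<^sub>R (s2 *\<^sub>R (p1 t - w3)))"
  define p3 where "p3 = (\<lambda>t::real. w3 + t *\<^sub>R (s3 *\<^sub>R (p2 t - p1 t)))"
  define \<gamma> where "\<gamma> = (\<lambda>t::real. (p1 t + t *\<^sub>R d, p2 t + t *\<^sub>R d, p3 t + t *\<^sub>R d))"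
  have inM: "\<gamma> t \<in> Mtri" for t
  proof -
    have "Qf (\<gamma> t) = Qf (p1 t, p2 t, p3 t)" unfolding \<gamma>_def by (rule Qf_trans)
    also have "\<dots> = Qf (p1 t, p2 t, w3)" unfolding p3_def by (simp only: scaleR_scaleR Qf_m3)
    also have "\<dots> = Qf (p1 t, w2, w3)" unfolding p2_def by (simp only: scaleR_scaleR Qf_m2)
    also have "\<dots> = Qf (w1, w2, w3)" unfolding p1_def by (rule Qf_m1) (use x1p in simp)
    finally show ?thesis using Q Mtri_iff by simp
  qed
  have g0: "\<gamma> 0 = w" unfolding \<gamma>_def p1_def p2_def p3_def w by simp
  have "(\<gamma> has_derivative (\<lambda>h. h *\<^sub>R (x1 + d, s2 *\<^sub>R (w1 - w3) + d, s3 *\<^sub>R (w2 - w1) + d))) (at 0)"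
    unfolding \<gamma>_def p1_def p2_def p3_def
    apply (rule has_derivative_eq_rhs)
     apply (rule derivative_eq_intros refl)+
    apply (rule ext)
    apply (simp add: algebra_simps)
    done
  moreover have "(x1 + d, s2 *\<^sub>R (w1 - w3) + d, s3 *\<^sub>R (w2 - w1) + d) = a"
    unfolding a x1_def s2p s3p by simp
  ultimately have "(\<gamma> has_vector_derivative a) (at 0)" by (simp add: has_vector_derivative_def)
  then show ?thesis unfolding tangent_space_def using g0 inM by (auto intro!: exI[of _ 1])
qed

lemma tan_mono: "S \<subseteq> S' \<Longrightarrow> tangent_space S p \<subseteq> tangent_space S' p"
  unfolding tangent_space_def by blast

lemma fiber_tan:
  assumes w: "w = (w1, w2, w3)" and M: "w \<in> Mtri"
  shows "(d, d, d) \<in> tangent_space (fiber w) w"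
proof -
  define \<gamma> where "\<gamma> = (\<lambda>t::real. (w1 + t *\<^sub>R d, w2 + t *\<^sub>R d, w3 + t *\<^sub>R d))"
  have "\<gamma> t \<in> fiber w" for t
  proof -
    have "Qf (\<gamma> t) = Qf w" unfolding \<gamma>_def w by (rule Qf_trans)
    then have "\<gamma> t \<in> Mtri" using M Mtri_iff by simp
    moreover have "fst (Phi (\<gamma> t)) = fst (Phi w)"
      unfolding \<gamma>_def w Phi_def
      apply (simp add: Let_def algebra_simps)
      apply (simp only: scaleR_add_left[symmetric])
      apply simp
      done
    ultimately show ?thesis unfolding fiber_def by simp
  qed
  moreover have "\<gamma> 0 = w" unfolding \<gamma>_def w by simp
  moreover have "(\<gamma> has_vector_derivative (d, d, d)) (at 0)"
  proof -
    have "(\<gamma> has_derivative (\<lambda>h. h *\<^sub>R (d, d, d))) (at 0)"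
      unfolding \<gamma>_def
      apply (rule has_derivative_eq_rhs)
       apply (rule derivative_eq_intros refl)+
      apply (rule ext)
      apply (simp add: algebra_simps)
      done
    then show ?thesis by (simp add: has_vector_derivative_def)
  qed
  ultimately show ?thesis unfolding tangent_space_def by (auto intro!: exI[of _ 1])
qed

lemma Ksum_add: "Ksum w (a + b) = Ksum w a + Ksum w b"
  by (simp add: Ksum_def)
lemma Ksum_diff: "Ksum w (a - b) = Ksum w a - Ksum w b"
  by (simp add: Ksum_def)
lemma Ksum_trans: "Ksum w (d, d, d) = 0"
  by (simp add: Ksum_def)

lemma TM_eq: assumes "w \<in> Mtri" shows "tangent_space Mtri w = {a. Ksum w a = 0}"
proof -
  obtain w1 w2 w3 where w: "w = (w1, w2, w3)" by (metis prod.collapse)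
  have "a \<in> tangent_space Mtri w" if "Ksum w a = 0" for a
  proof -
    obtain v1 v2 v3 where a: "a = (v1, v2, v3)" by (metis prod.collapse)
    show ?thesis by (rule tan_sup[OF w a assms that])
  qed
  then show ?thesis using tan_sub by blast
qed

lemma part4:
  assumes M: "w \<in> Mtri"
  shows "transverse_at (tangent_space (fiber w) w) (Fdist w) (tangent_space Mtri w)"
proof -
  obtain w1 w2 w3 where w: "w = (w1, w2, w3)" by (metis prod.collapse)
  have Q: "Qf (w1, w2, w3) = 3" using M w Mtri_iff by simp
  have fsub: "tangent_space (fiber w) w \<subseteq> tangent_space Mtri w"
    by (rule tan_mono) (auto simp: fiber_def)
  have Fd: "Fdist w = {a \<in> tangent_space Mtri w. case a of (a1, a2, a3) \<Rightarrow>
        det2 a1 (w3 - w2) = 0 \<and> det2 a2 (w1 - w3) = 0 \<and> det2 a3 (w2 - w1) = 0}"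
    unfolding Fdist_def w by simp
  show ?thesis unfolding transverse_at_def
  proof
    show "{x + y |x y. x \<in> tangent_space (fiber w) w \<and> y \<in> Fdist w} \<subseteq> tangent_space Mtri w"
    proof
      fix z assume "z \<in> {x + y |x y. x \<in> tangent_space (fiber w) w \<and> y \<in> Fdist w}"
      then obtain x y where z: "z = x + y" and x: "x \<in> tangent_space (fiber w) w" and y: "y \<in> Fdist w"
        by blast
      have "Ksum w x = 0" using x fsub TM_eq[OF M] by auto
      moreover have "Ksum w y = 0" using y Fd TM_eq[OF M] by auto
      ultimately have "Ksum w z = 0" using z Ksum_add by simp
      then show "z \<in> tangent_space Mtri w" using TM_eq[OF M] by simp
    qed
    show "tangent_space Mtri w \<subseteq> {x + y |x y. x \<in> tangent_space (fiber w) w \<and> y \<in> Fdist w}"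
    proof
      fix a assume aT: "a \<in> tangent_space Mtri w"
      obtain v1 v2 v3 where a: "a = (v1, v2, v3)" by (metis prod.collapse)
      define d where "d = dsol w a"
      have d1: "det2 d (w3 - w2) = det2 v1 (w3 - w2)" and d2: "det2 d (w1 - w3) = det2 v2 (w1 - w3)"
        and d3: "det2 d (w2 - w1) = - det2 v1 (w3 - w2) - det2 v2 (w1 - w3)"
        using dsol_props[OF Q, of v1 v2 v3] unfolding d_def w a by auto
      have K: "Ksum w a = 0" using aT TM_eq[OF M] by auto
      have Ks: "det2 v1 (w3 - w2) + det2 v2 (w1 - w3) + det2 v3 (w2 - w1) = 0"
        using K unfolding w a Ksum_def by simp
      have xF: "(d, d, d) \<in> tangent_space (fiber w) w" by (rule fiber_tan[OF w M])
      have "Ksum w (a - (d, d, d)) = 0" using K Ksum_diff Ksum_trans by simp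
      then have yT: "a - (d, d, d) \<in> tangent_space Mtri w" using TM_eq[OF M] by simp
      have "a - (d, d, d) \<in> Fdist w"
      proof -
        have e: "a - (d, d, d) = (v1 - d, v2 - d, v3 - d)" by (simp add: a)
        have c1: "det2 (v1 - d) (w3 - w2) = 0" using d1 by (simp only: det2_diff_l)
        have c2: "det2 (v2 - d) (w1 - w3) = 0" using d2 by (simp only: det2_diff_l)
        have c3: "det2 (v3 - d) (w2 - w1) = 0" using d3 Ks by (simp only: det2_diff_l)
        show ?thesis unfolding Fd using yT c1 c2 c3 e by (simp only: mem_Collect_eq prod.case)
      qed
      then show "a \<in> {x + y |x y. x \<in> tangent_space (fiber w) w \<and> y \<in> Fdist w}"
      proof -
        have "a = (d, d, d) + (a - (d, d, d))" by simp
        then show ?thesis using xF \<open>a - (d, d, d) \<in> Fdist w\<close> by blast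
      qed
    qed
  qed
qed

theorem lemma4p2:
  shows "(\<forall>w\<in>Mtri. det2 (fst (fst (Phi w))) (snd (fst (Phi w))) = 1)
    \<and> diffeomorphism_between Mtri SL2R2 Phi
    \<and> (\<forall>w\<in>Mtri. sigma w \<in> Mtri \<and> Phi (sigma w) = Tprod (Phi w))
    \<and> (\<forall>w\<in>Mtri. transverse_at (tangent_space (fiber w) w) (Fdist w) (tangent_space Mtri w))"
  using part1 part2 part3 part4 by blast

end
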